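(* Let $D$ be a digraph of order $n$ and $2\le k\le n$. Then $\lambda_k(D)\le \lambda(D)$. Moreover, the bound is sharp.
   Context: Digraphs are finite, without loops or parallel arcs. $\lambda(D)$ is the arc-strong connectivity of $D$ (the minimum number of arcs whose deletion leaves a non-strong digraph). For $S\subseteq V(D)$, $\lambda_S(D)$ is the maximum number of pairwise arc-disjoint strong subgraphs of $D$ containing $S$, and $\lambda_k(D)=\min\{\lambda_S(D): S\subseteq V(D), |S|=k\}$. *)

theory Defs
  imports Main
begin

text \<open>A digraph is a pair (V, A): finite vertex set V, arc set A \<subseteq> V \<times> V,
  no loops (parallel arcs are impossible since A is a set).\<close>

definition digraph :: "'a set \<Rightarrow> ('a \<times> 'a) set \<Rightarrow> bool" where
  "digraph V A \<longleftrightarrow> finite V \<and> A \<subseteq> V \<times> V \<and> (\<forall>v. (v, v) \<notin> A)"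

definition strong :: "'a set \<Rightarrow> ('a \<times> 'a) set \<Rightarrow> bool" where
  "strong V A \<longleftrightarrow> (\<forall>u\<in>V. \<forall>v\<in>V. (u, v) \<in> A\<^sup>*)"

definition arc_strong_conn :: "'a set \<Rightarrow> ('a \<times> 'a) set \<Rightarrow> nat" where
  "arc_strong_conn V A = Min {card F | F. F \<subseteq> A \<and> \<not> strong V (A - F)}"

definition strong_subgraph_containing ::
  "'a set \<Rightarrow> ('a \<times> 'a) set \<Rightarrow> 'a set \<Rightarrow> 'a set \<Rightarrow> ('a \<times> 'a) set \<Rightarrow> bool" where
  "strong_subgraph_containing V A S W B \<longleftrightarrow>
     W \<subseteq> V \<and> B \<subseteq> A \<and> B \<subseteq> W \<times> W \<and> S \<subseteq> W \<and> strong W B"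

definition lambda_S :: "'a set \<Rightarrow> ('a \<times> 'a) set \<Rightarrow> 'a set \<Rightarrow> nat" where
  "lambda_S V A S = Max {m. \<exists>H :: nat \<Rightarrow> 'a set \<times> ('a \<times> 'a) set.
      (\<forall>i<m. strong_subgraph_containing V A S (fst (H i)) (snd (H i))) \<and>
      (\<forall>i<m. \<forall>j<m. i \<noteq> j \<longrightarrow> snd (H i) \<inter> snd (H j) = {})}"

definition lambda_k :: "'a set \<Rightarrow> ('a \<times> 'a) set \<Rightarrow> nat \<Rightarrow> nat" where
  "lambda_k V A k = Min {lambda_S V A S | S. S \<subseteq> V \<and> card S = k}"

end

theory Submission
  imports Defs
begin

lemma two_elems: "1 < card A \<Longrightarrow> \<exists>u\<in>A. \<exists>v\<in>A. u \<noteq> v"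
proof -
  assume a: "1 < card A"
  then have "finite A" by (metis card.infinite not_less_zero)
  with a show ?thesis using card_le_Suc0_iff_eq by fastforce
qed

lemma count_bound:
  assumes "finite X" "\<forall>i<m. snd (H i) \<inter> X \<noteq> {}"
    "\<forall>i<m. \<forall>j<m. i \<noteq> j \<longrightarrow> snd (H i) \<inter> snd (H j) = {}"
  shows "m \<le> card X"
proof -
  define f where "f i = (SOME x. x \<in> snd (H i) \<inter> X)" for i
  have f: "f i \<in> snd (H i) \<inter> X" if "i < m" for i
  proof -
    from assms(2) that obtain x where "x \<in> snd (H i) \<inter> X" by blast
    then show ?thesis unfolding f_def by (rule someI)
  qed
  have "inj_on f {..<m}"
  proof (rule inj_onI)
    fix i j assume ij: "i \<in> {..<m}" "j \<in> {..<m}" "f i = f j"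
    show "i = j"
    proof (rule ccontr)
      assume "i \<noteq> j"
      then have "snd (H i) \<inter> snd (H j) = {}" using assms(3) ij by simp
      moreover have "f i \<in> snd (H i)" "f j \<in> snd (H j)" using f[of i] f[of j] ij(1,2) by auto
      ultimately show False using ij(3) by auto
    qed
  qed
  moreover have "f ` {..<m} \<subseteq> X" using f by auto
  ultimately have "card {..<m} \<le> card X" using card_inj_on_le assms(1) by blast
  then show ?thesis by simp
qed

lemma meets_F:
  assumes "strong_subgraph_containing V A S W B" "u \<in> S" "v \<in> S" "(u, v) \<notin> (A - F)\<^sup>*"
  shows "B \<inter> F \<noteq> {}"
proof
  assume "B \<inter> F = {}"
  then have "B \<subseteq> A - F" using assms(1) unfolding strong_subgraph_containing_def by auto
  moreover have "(u, v) \<in> B\<^sup>*" using assms(1-3) unfolding strong_subgraph_containing_def strong_def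
    by blast
  ultimately show False using assms(4) rtrancl_mono by blast
qed

lemma lambdaS_bound:
  assumes "u \<in> S" "v \<in> S" "(u, v) \<notin> (A - F)\<^sup>*" "finite F"
  shows "finite {m. \<exists>H :: nat \<Rightarrow> 'a set \<times> ('a \<times> 'a) set.
      (\<forall>i<m. strong_subgraph_containing V A S (fst (H i)) (snd (H i))) \<and>
      (\<forall>i<m. \<forall>j<m. i \<noteq> j \<longrightarrow> snd (H i) \<inter> snd (H j) = {})}"
    and "lambda_S V A S \<le> card F"
proof -
  let ?M = "{m. \<exists>H :: nat \<Rightarrow> 'a set \<times> ('a \<times> 'a) set.
      (\<forall>i<m. strong_subgraph_containing V A S (fst (H i)) (snd (H i))) \<and>
      (\<forall>i<m. \<forall>j<m. i \<noteq> j \<longrightarrow> snd (H i) \<inter> snd (H j) = {})}"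
  have sub: "?M \<subseteq> {..card F}"
  proof
    fix m assume "m \<in> ?M"
    then obtain H where h1: "\<forall>i<m. strong_subgraph_containing V A S (fst (H i)) (snd (H i))"
      and h2: "\<forall>i<m. \<forall>j<m. i \<noteq> j \<longrightarrow> snd (H i) \<inter> snd (H j) = {}" by blast
    have "\<forall>i<m. snd (H i) \<inter> F \<noteq> {}"
    proof (intro allI impI)
      fix i assume "i < m"
      then show "snd (H i) \<inter> F \<noteq> {}" using meets_F[OF _ assms(1-3)] h1 by blast
    qed
    then have "m \<le> card F" using count_bound[OF assms(4) _ h2] by blast
    then show "m \<in> {..card F}" by simp
  qed
  show fin: "finite ?M" using sub finite_subset by blast
  have "0 \<in> ?M" by auto
  then have "?M \<noteq> {}" by blast
  then have "Max ?M \<le> card F" using sub fin by (simp add: Max_le_iff subset_eq)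
  then show "lambda_S V A S \<le> card F" unfolding lambda_S_def .
qed

lemma part1:
  assumes "digraph V A" "2 \<le> k" "k \<le> card V"
  shows "lambda_k V A k \<le> arc_strong_conn V A"
proof -
  have finV: "finite V" and AV: "A \<subseteq> V \<times> V" using assms(1) unfolding digraph_def by auto
  have finA: "finite A" using finV AV finite_subset by blast
  let ?M = "{card F | F. F \<subseteq> A \<and> \<not> strong V (A - F)}"
  have "?M = card ` {F. F \<subseteq> A \<and> \<not> strong V (A - F)}" by auto
  then have finM: "finite ?M" using finA by simp
  have "1 < card V" using assms by simp
  then obtain u v where uv: "u \<in> V" "v \<in> V" "u \<noteq> v" using two_elems by blast
  have "\<not> strong V (A - A)" unfolding strong_def using uv by auto
  then have "card A \<in> ?M" by blast
  then have "Min ?M \<in> ?M" using finM Min_in by blast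
  then have "arc_strong_conn V A \<in> ?M" unfolding arc_strong_conn_def .
  then obtain F where F: "F \<subseteq> A" "\<not> strong V (A - F)" "card F = arc_strong_conn V A"
    by (smt (verit) mem_Collect_eq)
  from F(2) obtain x y where xy: "x \<in> V" "y \<in> V" "(x, y) \<notin> (A - F)\<^sup>*"
    unfolding strong_def by blast
  then have "x \<noteq> y" by auto
  then have "card {x, y} \<le> k" using assms(2) by simp
  moreover have "{x, y} \<subseteq> V" using xy by simp
  ultimately obtain S where S: "{x, y} \<subseteq> S" "S \<subseteq> V" "card S = k"
    using exists_subset_between[of "{x,y}" k V] assms(3) finV by blast
  have finF: "finite F" using F(1) finA finite_subset by blast
  have "x \<in> S" "y \<in> S" using S(1) by auto
  then have "lambda_S V A S \<le> card F" using lambdaS_bound(2)[OF _ _ xy(3) finF] by blast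
  moreover have "lambda_k V A k \<le> lambda_S V A S"
  proof -
    have eq: "{lambda_S V A S | S. S \<subseteq> V \<and> card S = k} = lambda_S V A ` {S. S \<subseteq> V \<and> card S = k}"
      by auto
    have "finite {S. S \<subseteq> V \<and> card S = k}" using finV by simp
    then have fin: "finite {lambda_S V A S | S. S \<subseteq> V \<and> card S = k}" unfolding eq by simp
    have "lambda_S V A S \<in> {lambda_S V A S | S. S \<subseteq> V \<and> card S = k}" using S(2,3) by blast
    then show ?thesis unfolding lambda_k_def using fin Min_le by blast
  qed
  ultimately show ?thesis using F(3) by simp
qed

definition cyc :: "nat \<Rightarrow> (nat \<times> nat) set" where
  "cyc n = {(i, Suc i) | i. Suc i < n} \<union> {(n - 1, 0)}"

lemma cyc_path: "i \<le> j \<Longrightarrow> j < n \<Longrightarrow> (i, j) \<in> (cyc n)\<^sup>*"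
proof (induction j)
  case 0
  then show ?case by simp
next
  case (Suc j)
  show ?case
  proof (cases "i = Suc j")
    case True then show ?thesis by simp
  next
    case False
    then have "(i, j) \<in> (cyc n)\<^sup>*" using Suc by simp
    moreover have "(j, Suc j) \<in> cyc n" using Suc unfolding cyc_def by auto
    ultimately show ?thesis by (rule rtrancl_into_rtrancl)
  qed
qed

lemma cyc_strong: "2 \<le> n \<Longrightarrow> strong {..<n} (cyc n)"
  unfolding strong_def
proof (intro ballI)
  fix u v assume n: "2 \<le> n" and u: "u \<in> {..<n}" and v: "v \<in> {..<n}"
  show "(u, v) \<in> (cyc n)\<^sup>*"
  proof (cases "u \<le> v")
    case True then show ?thesis using cyc_path v by simp
  next
    case False
    have "(u, n - 1) \<in> (cyc n)\<^sup>*" using cyc_path u by simp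
    moreover have "(n - 1, 0) \<in> cyc n" unfolding cyc_def by simp
    moreover have "(0, v) \<in> (cyc n)\<^sup>*" using cyc_path v by simp
    ultimately show ?thesis by (meson rtrancl_into_rtrancl rtrancl_trans)
  qed
qed

lemma cyc_digraph: "2 \<le> n \<Longrightarrow> digraph {..<n} (cyc n)"
  unfolding digraph_def cyc_def by auto

lemma cyc_conn: "2 \<le> n \<Longrightarrow> arc_strong_conn {..<n} (cyc n) \<le> 1"
proof -
  assume n: "2 \<le> n"
  have fin: "finite (cyc n)" using cyc_digraph[OF n] unfolding digraph_def
    by (meson finite_SigmaI finite_lessThan finite_subset)
  let ?F = "{(0::nat, 1::nat)}"
  have F: "?F \<subseteq> cyc n" using n unfolding cyc_def by auto
  have noout: "\<And>w. (0, w) \<notin> cyc n - ?F" using n unfolding cyc_def by auto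
  have "(0, 1) \<notin> (cyc n - ?F)\<^sup>*"
  proof
    assume "(0, 1) \<in> (cyc n - ?F)\<^sup>*"
    then show False
      by (metis converse_rtranclE noout zero_neq_one)
  qed
  moreover have "(0::nat) \<in> {..<n}" "(1::nat) \<in> {..<n}" using n by auto
  ultimately have ns: "\<not> strong {..<n} (cyc n - ?F)" unfolding strong_def by blast
  let ?M = "{card F | F. F \<subseteq> cyc n \<and> \<not> strong {..<n} (cyc n - F)}"
  have "?M = card ` {F. F \<subseteq> cyc n \<and> \<not> strong {..<n} (cyc n - F)}" by auto
  then have "finite ?M" using fin by simp
  moreover have "1 \<in> ?M" using F ns by force
  ultimately show ?thesis unfolding arc_strong_conn_def by (meson Min_le)
qed

lemma cyc_lk: "2 \<le> k \<Longrightarrow> k \<le> n \<Longrightarrow> 1 \<le> lambda_k {..<n} (cyc n) k"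
proof -
  assume k: "2 \<le> k" "k \<le> n"
  then have n: "2 \<le> n" by simp
  have finA: "finite (cyc n)" using cyc_digraph[OF n] unfolding digraph_def
    by (meson finite_SigmaI finite_lessThan finite_subset)
  let ?L = "{lambda_S {..<n} (cyc n) S | S. S \<subseteq> {..<n} \<and> card S = k}"
  have "?L = lambda_S {..<n} (cyc n) ` {S. S \<subseteq> {..<n} \<and> card S = k}" by auto
  then have finL: "finite ?L" by simp
  have "k \<le> card {..<n}" using k by simp
  then obtain S0 where S0: "S0 \<subseteq> {..<n}" "card S0 = k"
    using obtain_subset_with_card_n[of k "{..<n}"] by metis
  then have "lambda_S {..<n} (cyc n) S0 \<in> ?L" by blast
  then have neL: "?L \<noteq> {}" by blast
  have one: "1 \<le> lambda_S {..<n} (cyc n) S" if S: "S \<subseteq> {..<n}" "card S = k" for S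
  proof -
    have "1 < card S" using S k by simp
    then obtain u v where uv: "u \<in> S" "v \<in> S" "u \<noteq> v" using two_elems by blast
    have "(u, v) \<notin> (cyc n - cyc n)\<^sup>*" using uv by simp
    note fm = lambdaS_bound(1)[OF uv(1,2) this finA, of "{..<n}"]
    have cA: "cyc n \<subseteq> {..<n} \<times> {..<n}" using cyc_digraph[OF n] unfolding digraph_def by blast
    have ss: "strong_subgraph_containing {..<n} (cyc n) S {..<n} (cyc n)"
      unfolding strong_subgraph_containing_def using S(1) cyc_strong[OF n] cA by blast
    let ?H = "\<lambda>_::nat. ({..<n}, cyc n)"
    have "(\<forall>i<1. strong_subgraph_containing {..<n} (cyc n) S (fst (?H i)) (snd (?H i))) \<and>
      (\<forall>i<1. \<forall>j<1. i \<noteq> j \<longrightarrow> snd (?H i) \<inter> snd (?H j) = {})"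
      using ss by simp
    then have "1 \<in> {m. \<exists>H :: nat \<Rightarrow> nat set \<times> (nat \<times> nat) set.
      (\<forall>i<m. strong_subgraph_containing {..<n} (cyc n) S (fst (H i)) (snd (H i))) \<and>
      (\<forall>i<m. \<forall>j<m. i \<noteq> j \<longrightarrow> snd (H i) \<inter> snd (H j) = {})}"
      by (intro CollectI exI[of _ ?H])
    then show ?thesis unfolding lambda_S_def using fm by (rule Max_ge[rotated])
  qed
  have "\<forall>x\<in>?L. 1 \<le> x" using one by blast
  then show ?thesis unfolding lambda_k_def using finL neL by simp
qed

theorem theorem3p7:
  shows "(\<forall>(V :: 'a set) A k. digraph V A \<and> 2 \<le> k \<and> k \<le> card V \<longrightarrow>
            lambda_k V A k \<le> arc_strong_conn V A)
       \<and> (\<forall>n k. 2 \<le> k \<and> k \<le> n \<longrightarrow>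
            (\<exists>(V :: nat set) A. digraph V A \<and> card V = n \<and> strong V A \<and>
               lambda_k V A k = arc_strong_conn V A))"
proof (intro conjI allI impI)
  fix V :: "'a set" and A k
  assume "digraph V A \<and> 2 \<le> k \<and> k \<le> card V"
  then show "lambda_k V A k \<le> arc_strong_conn V A" using part1 by blast
next
  fix n k :: nat
  assume nk: "2 \<le> k \<and> k \<le> n"
  then have n: "2 \<le> n" by simp
  have "lambda_k {..<n} (cyc n) k \<le> arc_strong_conn {..<n} (cyc n)"
    using part1[OF cyc_digraph[OF n]] nk by simp
  moreover have "arc_strong_conn {..<n} (cyc n) \<le> 1" using cyc_conn[OF n] .
  moreover have "1 \<le> lambda_k {..<n} (cyc n) k" using cyc_lk nk by simp
  ultimately have eq: "lambda_k {..<n} (cyc n) k = arc_strong_conn {..<n} (cyc n)" by linarith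
  show "\<exists>(V :: nat set) A. digraph V A \<and> card V = n \<and> strong V A \<and>
               lambda_k V A k = arc_strong_conn V A"
  proof (intro exI conjI)
    show "digraph {..<n} (cyc n)" using cyc_digraph[OF n] .
    show "card {..<n} = n" by simp
    show "strong {..<n} (cyc n)" using cyc_strong[OF n] .
    show "lambda_k {..<n} (cyc n) k = arc_strong_conn {..<n} (cyc n)" using eq .
  qed
qed

end
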